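(* If $\lambda$ is the partition associated with a gap sequence $\{w_1,\dots,w_g\}$, then $s_\lambda(t)$ does not depend on $t_i$ for every positive integer $i\notin\{w_1,\dots,w_g\}$.
   Context: For $t=(t_1,t_2,\dots)$ define $p_m(t)$ by $\exp(\sum_{m\ge1}t_mk^m)=\sum_{m\ge0}p_m(t)k^m$, $p_m=0$ for $m<0$; $s_\mu(t)=\det(p_{\mu_i-i+j}(t))_{1\le i,j\le l}$ for a partition $\mu=(\mu_1\ge\dots\ge\mu_l)$. A gap sequence of genus $g\ge1$ is a set $G=\{w_1<\dots<w_g\}\subset\mathbb Z_{\ge0}$ with $g$ elements whose complement in $\mathbb Z_{\ge0}$ contains $0$ and is closed under addition; its partition is $\lambda=(w_g,\dots,w_1)-(g-1,\dots,1,0)$. *)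

theory Defs
  imports "HOL-Computational_Algebra.Formal_Power_Series" "Jordan_Normal_Form.Determinant"
begin

definition tseries :: "(nat \<Rightarrow> 'a::field_char_0) \<Rightarrow> 'a fps" where
  "tseries t = Abs_fps (\<lambda>m. if m = 0 then 0 else t m)"

definition schur_p :: "int \<Rightarrow> (nat \<Rightarrow> 'a::field_char_0) \<Rightarrow> 'a" where
  "schur_p m t = (if m < 0 then 0 else fps_nth (fps_exp 1 oo tseries t) (nat m))"

text \<open>Schur function of a partition mu = [mu_1, ..., mu_l] (0-indexed list):
  det (p_{mu_i - i + j}) for 1 <= i,j <= l.\<close>
definition schur_s :: "nat list \<Rightarrow> (nat \<Rightarrow> 'a::field_char_0) \<Rightarrow> 'a" where
  "schur_s mu t = det (mat (length mu) (length mu)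
      (\<lambda>(i, j). schur_p (int (mu ! i) - int i + int j) t))"

definition gap_sequence :: "nat set \<Rightarrow> bool" where
  "gap_sequence G \<longleftrightarrow> finite G \<and> card G \<ge> 1 \<and> 0 \<notin> G \<and>
     (\<forall>a b. a \<notin> G \<longrightarrow> b \<notin> G \<longrightarrow> a + b \<notin> G)"

text \<open>Partition (w_g, ..., w_1) - (g-1, ..., 1, 0), as the list [lambda_1, ..., lambda_g].\<close>
definition gap_partition :: "nat set \<Rightarrow> nat list" where
  "gap_partition G = rev (map (\<lambda>k. sorted_list_of_set G ! k - k) [0..<card G])"

end

theory Submission imports Defs begin

definition EE :: "'a::field_char_0 fps \<Rightarrow> 'a fps" where "EE a = fps_exp 1 oo a"

lemma EE_deriv: "fps_nth a 0 = 0 \<Longrightarrow> fps_deriv (EE a) = EE a * fps_deriv a"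
  unfolding EE_def by (simp add: fps_compose_deriv)

lemma EE_0: "fps_nth (EE a) 0 = 1" unfolding EE_def by simp

lemma EE_add:
  assumes a: "fps_nth a 0 = 0" and b: "fps_nth b 0 = 0"
  shows "EE (a + b) = EE a * EE b"
proof -
  define H where "H = EE (a+b) * EE (-a) * EE (-b)"
  have "fps_deriv H = 0"
    unfolding H_def using a b by (simp add: EE_deriv algebra_simps)
  hence H1: "H = 1"
    unfolding fps_deriv_eq_0_iff by (simp add: H_def EE_0)
  have inv: "EE c * EE (-c) = 1" if "fps_nth c 0 = 0" for c
  proof -
    have "fps_deriv (EE c * EE (-c)) = 0" using that by (simp add: EE_deriv algebra_simps)
    thus ?thesis unfolding fps_deriv_eq_0_iff by (simp add: EE_0)
  qed
  have "EE (a+b) = EE (a+b) * (EE a * EE (-a)) * (EE b * EE (-b))"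
    using inv[OF a] inv[OF b] by simp
  also have "\<dots> = H * EE a * EE b" unfolding H_def by (simp add: algebra_simps)
  finally show ?thesis using H1 by simp
qed

lemma gap_mult:
  assumes "gap_sequence G" "i \<notin> G"
  shows "i * r \<notin> G"
proof (induction r)
  case 0 then show ?case using assms unfolding gap_sequence_def by simp
next
  case (Suc r)
  have "i + i * r \<notin> G" using assms(1) assms(2) Suc unfolding gap_sequence_def by blast
  then show ?case by simp
qed

lemma Q_nth_zero:
  assumes "\<not> i dvd n"
  shows "fps_nth (EE (fps_const d * fps_X ^ i)) n = 0"
proof -
  have "fps_nth ((fps_const d * fps_X ^ i) ^ k) n = 0" for k
  proof -
    have "(fps_const d * fps_X ^ i) ^ k = fps_const (d ^ k) * fps_X ^ (i * k)"
      by (simp add: power_mult_distrib power_mult)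
    thus ?thesis using assms by (auto simp: fps_X_power_iff)
  qed
  thus ?thesis unfolding EE_def fps_compose_nth by simp
qed

lemma Q_zero:
  assumes "gap_sequence G" "i \<notin> G" "x \<in> G" "y \<notin> G" "y \<le> x"
  shows "fps_nth (EE (fps_const d * fps_X ^ i)) (x - y) = 0"
proof -
  have "\<not> i dvd (x - y)"
  proof
    assume "i dvd (x - y)"
    then obtain r where r: "x - y = i * r" by auto
    have "i * r \<notin> G" using gap_mult assms by blast
    hence "y + i * r \<notin> G" using assms(1,4) unfolding gap_sequence_def by blast
    moreover have "y + i * r = x" using r assms(5) by simp
    ultimately show False using assms(3) by simp
  qed
  thus ?thesis by (rule Q_nth_zero)
qed

lemma tseries_upd:
  assumes "0 < i"
  shows "tseries (t(i := c)) = tseries t + fps_const (c - t i) * fps_X ^ i"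
  using assms by (intro fps_ext) (auto simp: tseries_def fps_X_power_iff)

lemma p_rel:
  assumes "0 < i" "0 \<le> m"
  shows "schur_p m (t(i := c)) =
    (\<Sum>n=0..nat m. fps_nth (EE (fps_const (c - t i) * fps_X ^ i)) n * schur_p (m - int n) t)"
proof -
  let ?D = "fps_const (c - t i) * fps_X ^ i"
  have "fps_exp 1 oo tseries (t(i := c)) = EE ?D * EE (tseries t)"
    unfolding tseries_upd[OF assms(1)] EE_def[symmetric]
    by (subst EE_add) (use assms(1) in \<open>auto simp: tseries_def\<close>)
  hence "schur_p m (t(i := c)) = fps_nth (EE ?D * EE (tseries t)) (nat m)"
    using assms by (simp add: schur_p_def)
  also have "\<dots> = (\<Sum>n=0..nat m. fps_nth (EE ?D) n * fps_nth (EE (tseries t)) (nat m - n))"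
    by (rule fps_mult_nth)
  also have "\<dots> = (\<Sum>n=0..nat m. fps_nth (EE ?D) n * schur_p (m - int n) t)"
    using assms by (intro sum.cong refl) (auto simp: schur_p_def EE_def nat_diff_distrib)
  finally show ?thesis .
qed


lemma key_G:
  fixes t :: "nat \<Rightarrow> 'a::field_char_0" and c :: 'a
  assumes gap: "gap_sequence G" and i: "0 < i" "i \<notin> G" and x: "x \<in> G" and e: "e \<le> 0"
  defines "Q \<equiv> EE (fps_const (c - t i) * fps_X ^ i)"
  shows "schur_p (int x + e) (t(i := c)) =
    (\<Sum>y\<in>G. (if y \<le> x then fps_nth Q (x - y) else 0) * schur_p (int y + e) t)"
proof (cases "int x + e < 0")
  case True
  have "schur_p (int y + e) t = 0" if "y \<le> x" for y
    using True that by (simp add: schur_p_def)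
  then show ?thesis using True by (auto simp: schur_p_def intro!: sum.neutral)
next
  case False
  define m where "m = nat (int x + e)"
  have mx: "m \<le> x" using e False unfolding m_def by simp
  have fin: "finite G" using gap unfolding gap_sequence_def by simp
  have "schur_p (int x + e) (t(i := c)) =
     (\<Sum>n=0..m. fps_nth Q n * schur_p (int x + e - int n) t)"
    unfolding m_def Q_def using False i by (intro p_rel) auto
  also have "\<dots> = (\<Sum>y\<in>{x-m..x}. fps_nth Q (x - y) * schur_p (int y + e) t)"
  proof -
    have "(\<Sum>y\<in>{x-m..x}. fps_nth Q (x - y) * schur_p (int y + e) t)
        = (\<Sum>n\<in>(\<lambda>y. x - y) ` {x-m..x}. fps_nth Q n * schur_p (int x + e - int n) t)"
    proof (subst sum.reindex)
      show "inj_on (\<lambda>y. x - y) {x - m..x}" by (auto simp: inj_on_def)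
      show "(\<Sum>y\<in>{x-m..x}. fps_nth Q (x - y) * schur_p (int y + e) t) =
        sum ((\<lambda>n. fps_nth Q n * schur_p (int x + e - int n) t) \<circ> (\<lambda>y. x - y)) {x - m..x}"
        by (intro sum.cong refl) (auto simp: of_nat_diff ac_simps)
    qed
    also have "(\<lambda>y. x - y) ` {x-m..x} = {0..m}"
    proof
      show "(\<lambda>y. x - y) ` {x-m..x} \<subseteq> {0..m}" using mx by auto
      show "{0..m} \<subseteq> (\<lambda>y. x - y) ` {x-m..x}"
      proof
        fix n assume "n \<in> {0..m}"
        hence "n = x - (x - n) \<and> x - n \<in> {x-m..x}" using mx by auto
        thus "n \<in> (\<lambda>y. x - y) ` {x-m..x}" by blast
      qed
    qed
    finally show ?thesis by simp
  qed
  also have "\<dots> = (\<Sum>y\<in>{0..x}. fps_nth Q (x - y) * schur_p (int y + e) t)"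
  proof (rule sum.mono_neutral_left)
    show "\<forall>y\<in>{0..x} - {x - m..x}. fps_nth Q (x - y) * schur_p (int y + e) t = 0"
      using False unfolding m_def by (auto simp: schur_p_def)
  qed auto
  also have "\<dots> = (\<Sum>y\<in>G \<inter> {0..x}. fps_nth Q (x - y) * schur_p (int y + e) t)"
  proof (rule sum.mono_neutral_right)
    show "\<forall>y\<in>{0..x} - G \<inter> {0..x}. fps_nth Q (x - y) * schur_p (int y + e) t = 0"
    proof (intro ballI)
      fix y assume "y \<in> {0..x} - G \<inter> {0..x}"
      hence "y \<notin> G" "y \<le> x" by auto
      thus "fps_nth Q (x - y) * schur_p (int y + e) t = 0"
        using Q_zero[OF gap i(2) x \<open>y \<notin> G\<close> \<open>y \<le> x\<close>, of "c - t i"] unfolding Q_def by simp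
    qed
  qed auto
  also have "\<dots> = (\<Sum>y\<in>G. (if y \<le> x then fps_nth Q (x - y) else 0) * schur_p (int y + e) t)"
    by (subst sum.inter_restrict[OF fin]) (auto intro!: sum.cong)
  finally show ?thesis .
qed


lemma prod_list_map_one: "prod_list (map (\<lambda>_. (1::'a::monoid_mult)) xs) = 1"
  by (induction xs) auto

theorem proposition2p2:
  fixes G :: "nat set" and t :: "nat \<Rightarrow> 'a::field_char_0" and i :: nat and c :: 'a
  assumes "gap_sequence G" and "i > 0" and "i \<notin> G"
  shows "schur_s (gap_partition G) (t(i := c)) = schur_s (gap_partition G) t"
proof -
  note gap = assms(1)
  have fin: "finite G" and g1: "card G \<ge> 1" using gap unfolding gap_sequence_def by auto
  define g where "g = card G"
  define ws where "ws = sorted_list_of_set G"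
  have len: "length ws = g" unfolding ws_def g_def by simp
  have setws: "set ws = G" unfolding ws_def using fin by simp
  have sw: "sorted_wrt (<) ws" unfolding ws_def by (rule strict_sorted_list_of_set)
  have dist: "distinct ws" unfolding ws_def by simp
  have wsk: "k \<le> ws ! k" if "k < g" for k
    using that
  proof (induction k)
    case 0 then show ?case by simp
  next
    case (Suc k)
    have "ws ! k < ws ! Suc k" using sorted_wrt_nth_less[OF sw, of k "Suc k"] Suc.prems len by simp
    with Suc show ?case by simp
  qed
  define b where "b j = ws ! (g - 1 - j)" for j
  have bG: "b j \<in> G" if "j < g" for j
  proof -
    have "g - 1 - j < length ws" using that len by simp
    thus ?thesis unfolding b_def using setws nth_mem by blast
  qed
  have bmono: "b j < b k" if "k < j" "j < g" for j k
    unfolding b_def using sorted_wrt_nth_less[OF sw, of "g - 1 - j" "g - 1 - k"] that len by simp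
  have binj: "inj_on b {0..<g}"
  proof
    fix k1 k2 assume "k1 \<in> {0..<g}" "k2 \<in> {0..<g}" "b k1 = b k2"
    thus "k1 = k2" using bmono by (metis atLeastLessThan_iff less_irrefl nat_neq_iff)
  qed
  have bimg: "b ` {0..<g} = G"
  proof
    show "b ` {0..<g} \<subseteq> G" using bG by auto
    show "G \<subseteq> b ` {0..<g}"
    proof
      fix y assume "y \<in> G"
      then obtain n where n: "n < g" "ws ! n = y" using setws len by (metis in_set_conv_nth)
      hence "b (g - 1 - n) = y" unfolding b_def by simp
      moreover have "g - 1 - n \<in> {0..<g}" using n by simp
      ultimately show "y \<in> b ` {0..<g}" by blast
    qed
  qed
  have sumG: "(\<Sum>k\<in>{0..<g}. F (b k)) = (\<Sum>y\<in>G. F y)" for F :: "nat \<Rightarrow> 'a"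
    using sum.reindex[OF binj, of F] bimg by simp
  have lamlen: "length (gap_partition G) = g" unfolding gap_partition_def g_def by simp
  have lamnth: "int (gap_partition G ! j) = int (b j) - int (g - 1 - j)" if "j < g" for j
  proof -
    have "gap_partition G ! j = ws ! (g - 1 - j) - (g - 1 - j)"
      unfolding gap_partition_def using that
      by (simp add: rev_nth ws_def g_def[symmetric])
    moreover have "g - 1 - j \<le> ws ! (g - 1 - j)" using wsk that by simp
    ultimately show ?thesis unfolding b_def by simp
  qed
  define Mx where "Mx (s::nat \<Rightarrow> 'a) = mat g g (\<lambda>(j, l). schur_p (int (b j) + (int l + 1 - int g)) s)" for s
  have sM: "schur_s (gap_partition G) s = det (Mx s)" for s :: "nat \<Rightarrow> 'a"
  proof -
    have "mat (length (gap_partition G)) (length (gap_partition G))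
      (\<lambda>(i, j). schur_p (int (gap_partition G ! i) - int i + int j) s) = Mx s"
      unfolding Mx_def lamlen
      by (rule eq_matI) (auto simp: lamnth of_nat_diff intro!: arg_cong[where f="\<lambda>z. schur_p z s"])
    thus ?thesis unfolding schur_s_def by simp
  qed
  define Q where "Q = EE (fps_const (c - t i) * fps_X ^ i)"
  define Qm where "Qm = mat g g (\<lambda>(j, k). if b k \<le> b j then fps_nth Q (b j - b k) else 0)"
  have QM: "Mx (t(i := c)) = Qm * Mx t"
  proof (rule eq_matI)
    fix j l assume jl: "j < dim_row (Qm * Mx t)" "l < dim_col (Qm * Mx t)"
    hence j: "j < g" and l: "l < g" unfolding Qm_def Mx_def by auto
    have "(Qm * Mx t) $$ (j, l) = (\<Sum>k\<in>{0..<g}. Qm $$ (j, k) * Mx t $$ (k, l))"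
      using j l unfolding Qm_def Mx_def by (simp add: scalar_prod_def)
    also have "\<dots> = (\<Sum>k\<in>{0..<g}. (if b k \<le> b j then fps_nth Q (b j - b k) else 0)
                        * schur_p (int (b k) + (int l + 1 - int g)) t)"
      using j l unfolding Qm_def Mx_def by (intro sum.cong refl) auto
    also have "\<dots> = (\<Sum>y\<in>G. (if y \<le> b j then fps_nth Q (b j - y) else 0)
                        * schur_p (int y + (int l + 1 - int g)) t)"
      by (rule sumG)
    also have "\<dots> = schur_p (int (b j) + (int l + 1 - int g)) (t(i := c))"
      unfolding Q_def using l by (intro key_G[symmetric] gap assms(2,3) bG j) simp
    also have "\<dots> = Mx (t(i := c)) $$ (j, l)" unfolding Mx_def using j l by simp
    finally show "Mx (t(i := c)) $$ (j, l) = (Qm * Mx t) $$ (j, l)" by simp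
  qed (auto simp: Qm_def Mx_def)
  have ut: "upper_triangular Qm"
    by (rule upper_triangularI) (auto simp: Qm_def dest: bmono)
  have QmC: "Qm \<in> carrier_mat g g" unfolding Qm_def by simp
  have "det Qm = prod_list (diag_mat Qm)" by (rule det_upper_triangular[OF ut QmC])
  also have "diag_mat Qm = map (\<lambda>_. 1) [0..<g]"
    unfolding diag_mat_def Qm_def Q_def by (simp add: EE_0)
  finally have dQ: "det Qm = 1" by (simp add: prod_list_map_one)
  have "det (Mx (t(i := c))) = det Qm * det (Mx t)"
    unfolding QM by (rule det_mult[OF QmC]) (simp add: Mx_def)
  thus ?thesis using sM dQ by simp
qed

end
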